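(* Let $K$ be a Markov kernel from $(\mathbb{R}^d,\mathcal{B}(\mathbb{R}^d))$ to $(\mathbb{R}^{2d},\mathcal{B}(\mathbb{R}^{2d}))$, let $\alpha:\mathbb{R}^d\times\mathbb{R}^{2d}\to[0,1]$ be Borel measurable, and let $P$ be the Markov kernel on $\mathbb{R}^d$ given by $$P(q,A)=\int 1_A(\mathrm{proj}(z))\alpha(q,z)K(q,dz)+\delta_q(A)\int\{1-\alpha(q,z)\}K(q,dz).$$ Let $V:\mathbb{R}^d\to[1,\infty)$ be measurable, extended to $\mathbb{R}^{2d}$ by $V(q,p)=V(q)$, and for $q\in\mathbb{R}^d$ let $\mathscr R(q)=\{z\in\mathbb{R}^{2d}:\alpha(q,z)<1\}$ and $\mathscr B(q)=\{z\in\mathbb{R}^{2d}:V(\mathrm{proj}(z))\le V(q)\}$. Assume there exist $\lambda\in[0,1)$ and $b\ge0$ such that $KV\le\lambda V+b$ and $$\lim_{M\to\infty}\sup_{\{q:V(q)\ge M\}}K(q,\mathscr R(q)\cap\mathscr B(q))=0.$$ Then there exist $\tilde\lambda\in[0,1)$ and $\tilde b\ge0$ such that $PV\le\tilde\lambda V+\tilde b$.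
   Context: $\mathrm{proj}:\mathbb{R}^d\times\mathbb{R}^d\to\mathbb{R}^d$ is the projection onto the first $d$ coordinates. $KV(q)=\int V(z)K(q,dz)$. *)

theory Defs
  imports "HOL-Probability.Probability"
begin

definition mh_kernel ::
  "('a::euclidean_space \<Rightarrow> ('a \<times> 'a) measure) \<Rightarrow> ('a \<Rightarrow> 'a \<times> 'a \<Rightarrow> real) \<Rightarrow> 'a \<Rightarrow> 'a measure"
  where
  "mh_kernel K \<alpha> q = measure_of UNIV (sets borel)
     (\<lambda>A. (\<integral>\<^sup>+ z. indicator A (fst z) * ennreal (\<alpha> q z) \<partial>K q)
          + indicator A q * (\<integral>\<^sup>+ z. ennreal (1 - \<alpha> q z) \<partial>K q))"

end

theory Submission imports Defs begin

lemma mix_integral: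
  fixes M :: "('b::euclidean_space) measure" and a :: "'b \<Rightarrow> real" and q :: "'c::euclidean_space"
  assumes a[measurable]: "a \<in> borel_measurable M"
    and h[measurable]: "h \<in> borel_measurable (borel :: 'c measure)"
    and g_def: "g = (\<lambda>(z,c). if c then ennreal (a z) else ennreal (1 - a z))"
    and f_def: "f = (\<lambda>(z,c). if c then fst' z else q)"
    and fst'[measurable]: "fst' \<in> M \<rightarrow>\<^sub>M borel"
  shows "(\<integral>\<^sup>+ y. h y \<partial>distr (density (M \<Otimes>\<^sub>M count_space UNIV) g) borel f)
        = (\<integral>\<^sup>+ z. ennreal (a z) * h (fst' z) + ennreal (1 - a z) * h q \<partial>M)"
proof -
  have fm[measurable]: "f \<in> M \<Otimes>\<^sub>M count_space UNIV \<rightarrow>\<^sub>M borel"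
    unfolding f_def by measurable
  have gm[measurable]: "g \<in> borel_measurable (M \<Otimes>\<^sub>M count_space UNIV)"
    unfolding g_def by measurable
  have "(\<integral>\<^sup>+ y. h y \<partial>distr (density (M \<Otimes>\<^sub>M count_space UNIV) g) borel f)
     = (\<integral>\<^sup>+ x. g x * h (f x) \<partial>(M \<Otimes>\<^sub>M count_space UNIV))"
    by (simp add: nn_integral_distr nn_integral_density)
  also have "\<dots> = (\<integral>\<^sup>+ z. \<integral>\<^sup>+ c. g (z,c) * h (f (z,c)) \<partial>count_space UNIV \<partial>M)"
    by (rule sigma_finite_measure.nn_integral_fst[symmetric])
       (auto intro: sigma_finite_measure_count_space_finite)
  also have "\<dots> = (\<integral>\<^sup>+ z. ennreal (a z) * h (fst' z) + ennreal (1 - a z) * h q \<partial>M)"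
    by (rule nn_integral_cong) (simp add: nn_integral_count_space_finite UNIV_bool g_def f_def add.commute)
  finally show ?thesis .
qed


lemma mh_le:
  fixes K :: "'a::euclidean_space \<Rightarrow> ('a \<times> 'a) measure"
  assumes sK: "sets (K q) = sets borel"
    and am[measurable]: "(\<lambda>z. \<alpha> q z) \<in> borel_measurable borel"
    and Vm[measurable]: "V \<in> borel_measurable borel"
  shows "(\<integral>\<^sup>+ y. ennreal (V y) \<partial>mh_kernel K \<alpha> q)
     \<le> (\<integral>\<^sup>+ z. ennreal (\<alpha> q z) * ennreal (V (fst z)) + ennreal (1 - \<alpha> q z) * ennreal (V q) \<partial>K q)"
proof -
  define g where "g = (\<lambda>(z,c). if c then ennreal (\<alpha> q z) else ennreal (1 - \<alpha> q z))"
  define f where "f = (\<lambda>(z::'a\<times>'a,c::bool). if c then fst z else q)"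
  define N where "N = distr (density (K q \<Otimes>\<^sub>M count_space UNIV) g) borel f"
  have am'[measurable]: "(\<lambda>z. \<alpha> q z) \<in> borel_measurable (K q)"
    using am measurable_cong_sets[OF sK refl] by blast
  have fm'[measurable]: "fst \<in> K q \<rightarrow>\<^sub>M borel"
    by (subst measurable_cong_sets[OF sK refl]) (simp_all add: borel_prod[symmetric])
  have mix: "\<And>h. h \<in> borel_measurable borel \<Longrightarrow> (\<integral>\<^sup>+ y. h y \<partial>N)
        = (\<integral>\<^sup>+ z. ennreal (\<alpha> q z) * h (fst z) + ennreal (1 - \<alpha> q z) * h q \<partial>K q)"
    unfolding N_def by (rule mix_integral[OF am' _ g_def f_def fm'])
  have sN: "sets N = sets borel" unfolding N_def by simp
  have sP: "sets (mh_kernel K \<alpha> q) = sets borel"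
    unfolding mh_kernel_def by (simp add: sets_measure_of sets.sigma_sets_eq[of borel, simplified])
  have "mh_kernel K \<alpha> q \<le> N"
  proof (subst le_measure[OF trans[OF sP sN[symmetric]]], intro ballI)
    fix A assume A: "A \<in> sets (mh_kernel K \<alpha> q)"
    hence Ab[measurable]: "A \<in> sets borel" using sP by simp
    have "emeasure N A = (\<integral>\<^sup>+ y. indicator A y \<partial>N)"
      using Ab sN by (simp add: nn_integral_indicator)
    also have "\<dots> = (\<integral>\<^sup>+ z. ennreal (\<alpha> q z) * indicator A (fst z) + ennreal (1 - \<alpha> q z) * indicator A q \<partial>K q)"
      by (rule mix) measurable
    also have "\<dots> = (\<integral>\<^sup>+ z. indicator A (fst z) * ennreal (\<alpha> q z) \<partial>K q)
        + indicator A q * (\<integral>\<^sup>+ z. ennreal (1 - \<alpha> q z) \<partial>K q)"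
      by (subst nn_integral_add) (auto simp: nn_integral_cmult mult.commute)
    finally have eN: "emeasure N A = \<dots>" .
    show "emeasure (mh_kernel K \<alpha> q) A \<le> emeasure N A"
      unfolding eN unfolding mh_kernel_def emeasure_measure_of_conv by auto
  qed
  hence "(\<integral>\<^sup>+ y. ennreal (V y) \<partial>mh_kernel K \<alpha> q) \<le> (\<integral>\<^sup>+ y. ennreal (V y) \<partial>N)"
    by (rule nn_integral_mono_measure[OF trans[OF sP sN[symmetric]]])
  also have "\<dots> = (\<integral>\<^sup>+ z. ennreal (\<alpha> q z) * ennreal (V (fst z)) + ennreal (1 - \<alpha> q z) * ennreal (V q) \<partial>K q)"
    by (rule mix) measurable
  finally show ?thesis .
qed

theorem proposition5:
  fixes K :: "'a::euclidean_space \<Rightarrow> ('a \<times> 'a) measure"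
    and \<alpha> :: "'a \<Rightarrow> 'a \<times> 'a \<Rightarrow> real"
    and V :: "'a \<Rightarrow> real"
    and lam b :: real
  assumes K_kernel: "K \<in> borel \<rightarrow>\<^sub>M prob_algebra borel"
    and \<alpha>_meas: "(\<lambda>(q, z). \<alpha> q z) \<in> borel_measurable borel"
    and \<alpha>_range: "\<And>q z. 0 \<le> \<alpha> q z \<and> \<alpha> q z \<le> 1"
    and V_meas: "V \<in> borel_measurable borel"
    and V_ge1: "\<And>q. V q \<ge> 1"
    and lam_range: "0 \<le> lam" "lam < 1"
    and b_nonneg: "0 \<le> b"
    and drift_K: "\<And>q. (\<integral>\<^sup>+ z. ennreal (V (fst z)) \<partial>K q) \<le> ennreal (lam * V q + b)"
    and lim_RB: "((\<lambda>M. SUP q\<in>{q. V q \<ge> M}.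
                     emeasure (K q) ({z. \<alpha> q z < 1} \<inter> {z. V (fst z) \<le> V q}))
                  \<longlongrightarrow> 0) at_top"
  shows "\<exists>lam' b'. 0 \<le> lam' \<and> lam' < 1 \<and> 0 \<le> b' \<and>
           (\<forall>q. (\<integral>\<^sup>+ y. ennreal (V y) \<partial>mh_kernel K \<alpha> q) \<le> ennreal (lam' * V q + b'))"
proof -
  define eps where "eps = (1 - lam) / 2"
  have eps_pos: "eps > 0" using lam_range unfolding eps_def by simp
  define S where "S = (\<lambda>q. {z. \<alpha> q z < 1} \<inter> {z. V (fst z) \<le> V q})"
  have Kq: "sets (K q) = sets borel \<and> prob_space (K q)" for q
    using measurable_space[OF K_kernel, of q] by (simp add: space_prob_algebra)
  have am: "(\<lambda>z. \<alpha> q z) \<in> borel_measurable borel" for q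
  proof -
    have "(\<lambda>z::'a\<times>'a. (q, z)) \<in> borel \<rightarrow>\<^sub>M borel"
      by (simp add: borel_prod[symmetric])
    from measurable_compose[OF this \<alpha>_meas] show ?thesis by simp
  qed
  note V_meas[measurable]
  have fstm[measurable]: "fst \<in> (borel :: ('a\<times>'a) measure) \<rightarrow>\<^sub>M borel"
    by (simp add: borel_prod[symmetric])
  have Sm: "S q \<in> sets (K q)" for q
  proof -
    note am[of q, measurable]
    have "S q \<in> sets borel" unfolding S_def by measurable
    thus ?thesis using Kq by simp
  qed
  have bound: "(\<integral>\<^sup>+ y. ennreal (V y) \<partial>mh_kernel K \<alpha> q)
      \<le> ennreal (lam * V q + b) + ennreal (V q) * emeasure (K q) (S q)" for q
  proof -
    note am[of q, measurable]
    have sK: "sets (K q) = sets borel" using Kq by simp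
    have Vfm[measurable]: "(\<lambda>z. ennreal (V (fst z))) \<in> borel_measurable (K q)"
    proof -
      have "(\<lambda>z. ennreal (V (fst z))) \<in> borel_measurable (borel :: ('a\<times>'a) measure)" by measurable
      thus ?thesis using measurable_cong_sets[OF sK refl] by blast
    qed
    have pw: "ennreal (\<alpha> q z) * ennreal (V (fst z)) + ennreal (1 - \<alpha> q z) * ennreal (V q)
         \<le> ennreal (V (fst z)) + ennreal (V q) * indicator (S q) z" for z
    proof -
      have a: "0 \<le> \<alpha> q z" "\<alpha> q z \<le> 1" using \<alpha>_range by auto
      have v: "V (fst z) \<ge> 1" "V q \<ge> 1" using V_ge1 by auto
      have L: "ennreal (\<alpha> q z) * ennreal (V (fst z)) + ennreal (1 - \<alpha> q z) * ennreal (V q)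
          = ennreal (\<alpha> q z * V (fst z) + (1 - \<alpha> q z) * V q)"
        using a v by (simp add: ennreal_plus ennreal_mult)
      have R: "ennreal (V (fst z)) + ennreal (V q) * indicator (S q) z
          = ennreal (V (fst z) + V q * indicator (S q) z)"
        using v by (cases "z \<in> S q") (simp_all add: ennreal_plus)
      have "\<alpha> q z * V (fst z) + (1 - \<alpha> q z) * V q \<le> V (fst z) + V q * indicator (S q) z"
      proof (cases "z \<in> S q")
        case True
        hence "V (fst z) \<le> V q" unfolding S_def by auto
        hence "\<alpha> q z * V (fst z) \<le> \<alpha> q z * V q" using a by (simp add: mult_left_mono)
        thus ?thesis using True v a by (simp add: algebra_simps)
      next
        case False
        hence "\<alpha> q z = 1 \<or> V q < V (fst z)" unfolding S_def using a by auto
        thus ?thesis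
        proof
          assume "\<alpha> q z = 1" thus ?thesis using False by simp
        next
          assume "V q < V (fst z)"
          hence "(1 - \<alpha> q z) * V q \<le> (1 - \<alpha> q z) * V (fst z)" using a by (simp add: mult_left_mono)
          thus ?thesis using False by (simp add: algebra_simps)
        qed
      qed
      thus ?thesis unfolding L R by (rule ennreal_leI)
    qed
    have "(\<integral>\<^sup>+ y. ennreal (V y) \<partial>mh_kernel K \<alpha> q)
     \<le> (\<integral>\<^sup>+ z. ennreal (\<alpha> q z) * ennreal (V (fst z)) + ennreal (1 - \<alpha> q z) * ennreal (V q) \<partial>K q)"
      by (rule mh_le[where K=K and q=q and \<alpha>=\<alpha>, OF sK am[of q] V_meas])
    also have "\<dots> \<le> (\<integral>\<^sup>+ z. ennreal (V (fst z)) + ennreal (V q) * indicator (S q) z \<partial>K q)"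
      by (rule nn_integral_mono) (rule pw)
    also have "\<dots> = (\<integral>\<^sup>+ z. ennreal (V (fst z)) \<partial>K q) + ennreal (V q) * emeasure (K q) (S q)"
      using Sm[of q] by (subst nn_integral_add) (auto simp: nn_integral_cmult_indicator)
    also have "\<dots> \<le> ennreal (lam * V q + b) + ennreal (V q) * emeasure (K q) (S q)"
      using drift_K[of q] by (rule add_right_mono)
    finally show ?thesis .
  qed
  have "\<forall>\<^sub>F M in at_top. (SUP q\<in>{q. V q \<ge> M}. emeasure (K q) (S q)) < ennreal eps"
    using order_tendstoD(2)[OF lim_RB, of "ennreal eps"] eps_pos unfolding S_def by simp
  then obtain N0 where N0: "\<And>M. M \<ge> N0 \<Longrightarrow> (SUP q\<in>{q. V q \<ge> M}. emeasure (K q) (S q)) < ennreal eps"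
    by (auto simp: eventually_at_top_linorder)
  define lam' where "lam' = lam + eps"
  define b' where "b' = b + \<bar>N0\<bar>"
  show ?thesis
  proof (intro exI conjI allI)
    show "0 \<le> lam'" "lam' < 1" "0 \<le> b'" using lam_range b_nonneg eps_pos
      unfolding lam'_def b'_def eps_def by (auto simp: field_simps)
    fix q
    have Vq: "V q \<ge> 1" using V_ge1 by simp
    show "(\<integral>\<^sup>+ y. ennreal (V y) \<partial>mh_kernel K \<alpha> q) \<le> ennreal (lam' * V q + b')"
    proof (cases "V q \<ge> N0")
      case True
      have "emeasure (K q) (S q) \<le> (SUP q\<in>{q. V q \<ge> N0}. emeasure (K q) (S q))"
        using True by (intro SUP_upper) auto
      also have "\<dots> \<le> ennreal eps" using N0[of N0] by simp
      finally have e: "emeasure (K q) (S q) \<le> ennreal eps" .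
      have "ennreal (lam * V q + b) + ennreal (V q) * emeasure (K q) (S q)
          \<le> ennreal (lam * V q + b) + ennreal (V q) * ennreal eps"
        by (intro add_left_mono mult_left_mono e) auto
      also have "\<dots> = ennreal (lam * V q + b + V q * eps)"
        using Vq eps_pos lam_range b_nonneg by (simp add: ennreal_plus ennreal_mult)
      also have "\<dots> \<le> ennreal (lam' * V q + b')"
        by (rule ennreal_leI) (simp add: lam'_def b'_def algebra_simps)
      finally show ?thesis using bound[of q] by (rule order_trans[rotated])
    next
      case False
      have e: "emeasure (K q) (S q) \<le> 1" using Kq prob_space.emeasure_le_1 by blast
      have "ennreal (lam * V q + b) + ennreal (V q) * emeasure (K q) (S q)
          \<le> ennreal (lam * V q + b) + ennreal (V q) * 1"
        by (intro add_left_mono mult_left_mono e) auto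
      also have "\<dots> = ennreal (lam * V q + b + V q)"
        using Vq lam_range b_nonneg by (simp add: ennreal_plus)
      also have "\<dots> \<le> ennreal (lam' * V q + b')"
      proof (rule ennreal_leI)
        have "0 \<le> eps * V q" using Vq eps_pos by simp
        moreover have "N0 \<le> \<bar>N0\<bar>" by simp
        ultimately show "lam * V q + b + V q \<le> lam' * V q + b'"
          using False unfolding lam'_def b'_def by (simp add: algebra_simps)
      qed
      finally show ?thesis using bound[of q] by (rule order_trans[rotated])
    qed
  qed
qed

end
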